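(* Let $f$ be a transcendental meromorphic function projectable via $\exp_1$. Then there is $\ell\in\mathbb{Z}$ such that $f(z+1)=f(z)+\ell$ for every $z\in\mathbb{C}$. Moreover, for every $n\in\mathbb{N}$ and $k\in\mathbb{Z}$, $f^n(z+k)=f^n(z)+\ell^nk$.
   Context: $\exp_1(z)=e^{2\pi iz}$. A transcendental meromorphic $f:\mathbb{C}\to\widehat{\mathbb{C}}$ is projectable via $\exp_1$ if there is a function $g$ with $g\circ\exp_1=\exp_1\circ f$ wherever defined. *)

theory Defs
  imports "HOL-Complex_Analysis.Complex_Analysis" "HOL-Computational_Algebra.Polynomial"
begin

definition exp1 :: "complex \<Rightarrow> complex" where
  "exp1 z = exp (2 * of_real pi * \<i> * z)"

text \<open>A meromorphic function on the whole plane, represented as a map complex to complex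
  whose poles are the points where it tends to infinity (value 0 there by convention).\<close>
definition rational_fun :: "(complex \<Rightarrow> complex) \<Rightarrow> bool" where
  "rational_fun f \<longleftrightarrow> (\<exists>p q :: complex poly. q \<noteq> 0 \<and>
      (\<forall>z. poly q z \<noteq> 0 \<longrightarrow> f z = poly p z / poly q z))"

definition transcendental_meromorphic :: "(complex \<Rightarrow> complex) \<Rightarrow> bool" where
  "transcendental_meromorphic f \<longleftrightarrow> f nicely_meromorphic_on UNIV \<and> \<not> rational_fun f"

definition projectable_exp1 :: "(complex \<Rightarrow> complex) \<Rightarrow> bool" where
  "projectable_exp1 f \<longleftrightarrow> (\<exists>g. \<forall>z. \<not> is_pole f z \<longrightarrow> g (exp1 z) = exp1 (f z))"

definition iter_defined :: "(complex \<Rightarrow> complex) \<Rightarrow> nat \<Rightarrow> complex \<Rightarrow> bool" where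
  "iter_defined f n z \<longleftrightarrow> (\<forall>j<n. \<not> is_pole f ((f ^^ j) z))"

end

theory Submission
  imports Defs
begin

lemma exp1_eq_imp:
  assumes "exp1 a = exp1 b"
  shows "\<exists>n::int. a = b + of_int n"
proof -
  from assms obtain n :: int where "2 * of_real pi * \<i> * a = 2 * of_real pi * \<i> * b + (of_int (2 * n) * pi) * \<i>"
    unfolding exp1_def exp_eq by blast
  then have "2 * of_real pi * \<i> * a = 2 * of_real pi * \<i> * (b + of_int n)"
    by (simp add: algebra_simps)
  then have "a = b + of_int n" using pi_neq_zero by simp
  then show ?thesis by blast
qed

lemma exp1_plus1: "exp1 (z + 1) = exp1 z"
proof -
  have "exp1 (z + 1) = exp (2 * of_real pi * \<i> * z) * exp (2 * of_real pi * \<i>)"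
    unfolding exp1_def by (simp add: algebra_simps exp_add)
  also have "exp (2 * of_real pi * \<i>) = 1" by simp
  finally show ?thesis by (simp add: exp1_def)
qed

lemma basic:
  assumes mero: "f nicely_meromorphic_on UNIV" and proj: "projectable_exp1 f"
  shows "\<exists>l::int. \<forall>z. (is_pole f (z + 1) \<longleftrightarrow> is_pole f z) \<and>
          (\<not> is_pole f z \<longrightarrow> f (z + 1) = f z + of_int l)"
proof -
  obtain g where g: "\<And>z. \<not> is_pole f z \<Longrightarrow> g (exp1 z) = exp1 (f z)"
    using proj unfolding projectable_exp1_def by blast
  define P where "P = {z. is_pole f z}"
  have fm: "f meromorphic_on UNIV" using mero unfolding nicely_meromorphic_on_def by blast
  have "eventually (\<lambda>z. \<not>is_pole f z) (cosparse UNIV)"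
    by (rule meromorphic_on_imp_not_pole_cosparse[OF fm])
  then have Psp: "P sparse_in UNIV" unfolding eventually_cosparse P_def by simp
  have Pcl: "closed P" using Psp by (rule sparse_in_UNIV_imp_closed)
  have Pco: "countable P" using sparse_imp_countable[OF open_UNIV Psp] by simp
  define T where "T = P \<union> (+) (-1) ` P"
  define S where "S = UNIV - T"
  have Tcl: "closed T" unfolding T_def using Pcl by (intro closed_Un closed_translation)
  have Tco: "countable T" unfolding T_def using Pco by simp
  have Sop: "open S" unfolding S_def using Tcl by (intro open_Diff) auto
  have Scon: "connected S" unfolding S_def
    by (rule connected_open_diff_countable) (use Tco in auto)
  have memS: "z \<in> S \<longleftrightarrow> \<not> is_pole f z \<and> \<not> is_pole f (z + 1)" for z
  proof -
    have "z \<in> (+) (-1) ` P \<longleftrightarrow> z + 1 \<in> P"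
      by (auto simp: image_iff intro!: bexI[of _ "z+1"])
    then show ?thesis unfolding S_def T_def P_def by auto
  qed
  have an: "f analytic_on {z}" if "\<not> is_pole f z" for z
    using nicely_meromorphic_on_imp_analytic_at[OF mero _ that] by simp
  have ctf: "isCont f z" if "\<not> is_pole f z" for z
    using an[OF that] analytic_at_imp_isCont by blast
  define h where "h z = f (z + 1) - f z" for z
  have hint: "h z \<in> \<int>" if "z \<in> S" for z
  proof -
    have "exp1 (f (z+1)) = exp1 (f z)"
      using g[of "z+1"] g[of z] that memS exp1_plus1[of z] by simp
    then obtain n :: int where "f (z+1) = f z + of_int n" using exp1_eq_imp by blast
    then show ?thesis unfolding h_def by simp
  qed
  have hcont: "continuous_on S h"
  proof (rule continuous_at_imp_continuous_on, safe)
    fix z assume "z \<in> S"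
    then have "isCont f z" "isCont f (z+1)" using memS ctf by auto
    moreover have "isCont (\<lambda>w. f (w + 1)) z"
      using isCont_o2[where f="\<lambda>w. w + 1" and a=z and g=f] \<open>isCont f (z+1)\<close> by simp
    ultimately show "isCont h z" unfolding h_def
      by (intro continuous_intros) auto
  qed
  have "h constant_on S"
  proof (rule continuous_discrete_range_constant[OF Scon hcont])
    fix x assume x: "x \<in> S"
    show "\<exists>e>0. \<forall>y. y \<in> S \<and> h y \<noteq> h x \<longrightarrow> e \<le> norm (h y - h x)"
    proof (intro exI[of _ 1] conjI allI impI)
      fix y assume y: "y \<in> S \<and> h y \<noteq> h x"
      obtain a where a: "h y = of_int a" using hint y Ints_cases by metis
      obtain b where b: "h x = of_int b" using hint x Ints_cases by metis
      have "a \<noteq> b" using a b y by auto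
      then have "1 \<le> \<bar>a - b\<bar>" by linarith
      then have "1 \<le> norm (of_int (a - b) :: complex)"
        by (metis norm_of_int of_int_1_le_iff of_int_abs)
      then show "1 \<le> norm (h y - h x)" using a b by simp
    qed simp
  qed
  then obtain c where c: "\<And>z. z \<in> S \<Longrightarrow> h z = c" unfolding constant_on_def by blast
  have "S \<noteq> {}"
  proof
    assume "S = {}"
    then have "UNIV \<subseteq> T" unfolding S_def by auto
    then have "countable (UNIV :: complex set)" using Tco countable_subset by blast
    then show False using uncountable_UNIV_complex by blast
  qed
  then obtain z0 where z0: "z0 \<in> S" by blast
  obtain l :: int where l: "c = of_int l" using hint[OF z0] c[OF z0] Ints_cases by metis
  have hl: "f (z + 1) = f z + of_int l" if "z \<in> S" for z
    using c[OF that] l unfolding h_def by (simp add: algebra_simps)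
  have shiftlim: "filterlim (\<lambda>w. w + 1) (at (z + 1)) (at z)" for z :: complex
    by (rule filterlim_atI) (auto intro!: tendsto_eq_intros simp: eventually_at_filter)
  have evS: "eventually (\<lambda>w. w \<in> S) (at z)" for z
  proof -
    have iso: "isolated_singularity_at f w" for w
      by (rule meromorphic_on_isolated_singularity) (rule meromorphic_on_subset[OF fm], auto)
    have e1: "eventually (\<lambda>w. \<not> is_pole f w) (at z)" by (rule eventually_not_pole[OF iso])
    have "eventually (\<lambda>w. \<not> is_pole f w) (at (z+1))" by (rule eventually_not_pole[OF iso])
    then have e2: "eventually (\<lambda>w. \<not> is_pole f (w+1)) (at z)"
      using shiftlim[of z] unfolding filterlim_iff by blast
    show ?thesis using e1 e2 by eventually_elim (simp add: memS)
  qed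
  have poleeq: "is_pole f (z + 1) \<longleftrightarrow> is_pole f z" for z
  proof (rule ccontr)
    assume ne: "\<not> (is_pole f (z + 1) \<longleftrightarrow> is_pole f z)"
    have ev: "eventually (\<lambda>w. f (w + 1) = f w + of_int l) (at z)"
      using evS[of z] by eventually_elim (rule hl)
    show False
    proof (cases "is_pole f z")
      case True
      then have np: "\<not> is_pole f (z+1)" using ne by blast
      have "((\<lambda>w. f (w + 1)) \<longlongrightarrow> f (z+1)) (at z)"
        using ctf[OF np] shiftlim[of z] unfolding isCont_def
        by (metis filterlim_compose)
      then have "((\<lambda>w. f (w + 1) - of_int l) \<longlongrightarrow> f (z+1) - of_int l) (at z)"
        by (intro tendsto_intros)
      then have t: "(f \<longlongrightarrow> f (z+1) - of_int l) (at z)"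
        by (rule Lim_transform_eventually) (use ev in \<open>eventually_elim, simp\<close>)
      show False using not_tendsto_and_filterlim_at_infinity[OF trivial_limit_at t] True
        unfolding is_pole_def by blast
    next
      case False
      then have pp: "is_pole f (z+1)" using ne by blast
      have "((\<lambda>w. f w + of_int l) \<longlongrightarrow> f z + of_int l) (at z)"
        using ctf[OF False] unfolding isCont_def by (intro tendsto_intros)
      then have t: "((\<lambda>w. f (w + 1)) \<longlongrightarrow> f z + of_int l) (at z)"
        by (rule Lim_transform_eventually) (use ev in \<open>eventually_elim, simp\<close>)
      have "is_pole (f \<circ> (+) 1) z" using pp is_pole_shift_iff[of f 1 z] by (simp add: add_ac)
      then have "filterlim (\<lambda>w. f (w + 1)) at_infinity (at z)"
        unfolding is_pole_def o_def by (simp add: add_ac)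
      then show False using not_tendsto_and_filterlim_at_infinity[OF trivial_limit_at t] by blast
    qed
  qed
  have "\<not> is_pole f z \<Longrightarrow> f (z + 1) = f z + of_int l" for z
    using hl memS poleeq by blast
  then show ?thesis using poleeq by blast
qed


lemma shift_nat:
  assumes H: "\<forall>z. (is_pole f (z + 1) \<longleftrightarrow> is_pole f z) \<and>
          (\<not> is_pole f z \<longrightarrow> f (z + 1) = f z + of_int l)"
  shows "(is_pole f (z + of_nat m) \<longleftrightarrow> is_pole f z) \<and>
          (\<not> is_pole f z \<longrightarrow> f (z + of_nat m) = f z + of_int l * of_nat m)"
proof (induction m)
  case 0
  then show ?case by simp
next
  case (Suc m)
  have e: "z + of_nat (Suc m) = (z + of_nat m) + 1" by (simp add: algebra_simps)
  have h: "(is_pole f (z + of_nat m + 1) \<longleftrightarrow> is_pole f (z + of_nat m)) \<and>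
          (\<not> is_pole f (z + of_nat m) \<longrightarrow> f (z + of_nat m + 1) = f (z + of_nat m) + of_int l)"
    using H by blast
  have d: "f z + of_int l * of_nat m + of_int l = f z + of_int l * of_nat (Suc m)"
    by (simp add: algebra_simps)
  show ?case unfolding e using h Suc d by auto
qed

lemma shift_int:
  assumes H: "\<forall>z. (is_pole f (z + 1) \<longleftrightarrow> is_pole f z) \<and>
          (\<not> is_pole f z \<longrightarrow> f (z + 1) = f z + of_int l)"
  shows "(is_pole f (z + of_int k) \<longleftrightarrow> is_pole f z) \<and>
          (\<not> is_pole f z \<longrightarrow> f (z + of_int k) = f z + of_int (l * k))"
proof (cases "k \<ge> 0")
  case True
  define m where "m = nat k"
  have m: "k = int m" using True by (simp add: m_def)
  show ?thesis using shift_nat[OF H, of z m] m by simp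
next
  case False
  define m where "m = nat (- k)"
  have m: "k = - int m" using False by (simp add: m_def)
  have "(is_pole f (z - of_nat m + of_nat m) \<longleftrightarrow> is_pole f (z - of_nat m)) \<and>
          (\<not> is_pole f (z - of_nat m) \<longrightarrow> f (z - of_nat m + of_nat m) = f (z - of_nat m) + of_int l * of_nat m)"
    by (rule shift_nat[OF H])
  then show ?thesis using m by (auto simp: algebra_simps)
qed

lemma iter_defined_Suc:
  "iter_defined f (Suc n) z \<longleftrightarrow> \<not> is_pole f z \<and> iter_defined f n (f z)"
  unfolding iter_defined_def
  by (auto simp: funpow_Suc_right less_Suc_eq_0_disj simp del: funpow.simps)

lemma shift_iter:
  assumes H: "\<forall>z. (is_pole f (z + 1) \<longleftrightarrow> is_pole f z) \<and>
          (\<not> is_pole f z \<longrightarrow> f (z + 1) = f z + of_int l)"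
  shows "(iter_defined f n (z + of_int k) \<longleftrightarrow> iter_defined f n z) \<and>
          (iter_defined f n z \<longrightarrow>
             (f ^^ n) (z + of_int k) = (f ^^ n) z + of_int l ^ n * of_int k)"
proof (induction n arbitrary: z k)
  case 0
  then show ?case by (simp add: iter_defined_def)
next
  case (Suc n)
  note sh = shift_int[OF H, of z k]
  show ?case
  proof (cases "is_pole f z")
    case True
    then show ?thesis using sh by (simp add: iter_defined_Suc)
  next
    case False
    then have fz: "f (z + of_int k) = f z + of_int (l * k)" using sh by blast
    note IH = Suc.IH[of "f z" "l * k"]
    have np: "\<not> is_pole f (z + of_int k)" using sh False by blast
    have "(f ^^ Suc n) (z + of_int k) = (f ^^ n) (f z + of_int (l * k))"
      using fz by (simp add: funpow_Suc_right del: funpow.simps)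
    moreover have "(f ^^ Suc n) z = (f ^^ n) (f z)"
      by (simp add: funpow_Suc_right del: funpow.simps)
    moreover have "(of_int (l * k) :: complex) * of_int l ^ n = of_int l ^ Suc n * of_int k"
      by (simp add: algebra_simps)
    ultimately show ?thesis using IH False np fz
      by (auto simp: iter_defined_Suc)
  qed
qed

theorem lemma2p1:
  fixes f :: "complex \<Rightarrow> complex"
  assumes "transcendental_meromorphic f" and "projectable_exp1 f"
  shows "\<exists>l::int.
     (\<forall>z. (is_pole f (z + 1) \<longleftrightarrow> is_pole f z) \<and>
          (\<not> is_pole f z \<longrightarrow> f (z + 1) = f z + of_int l)) \<and>
     (\<forall>(n::nat) (k::int) z.
          (iter_defined f n (z + of_int k) \<longleftrightarrow> iter_defined f n z) \<and>
          (iter_defined f n z \<longrightarrow>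
             (f ^^ n) (z + of_int k) = (f ^^ n) z + of_int l ^ n * of_int k))"
proof -
  have m: "f nicely_meromorphic_on UNIV"
    using assms(1) unfolding transcendental_meromorphic_def by blast
  obtain l :: int where H: "\<forall>z. (is_pole f (z + 1) \<longleftrightarrow> is_pole f z) \<and>
          (\<not> is_pole f z \<longrightarrow> f (z + 1) = f z + of_int l)"
    using basic[OF m assms(2)] by blast
  show ?thesis using H shift_iter[OF H] by blast
qed

end
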